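(* Let $A\in\mathbb{R}^{m\times n}$, let $a=\max_{i,j}|A_{i,j}|$, and let $(U,V)$ be an iterative play system for $A$. Let $s,t\ge 0$ be integers and suppose that every row index and every column index is $E$-eligible in the interval $[s,s+t]$. Then $$\max V(s+t)-\min U(s+t)\le 4a(t+1).$$
   Context: An iterative play system $(U,V)$ for $A\in\mathbb{R}^{m\times n}$ is a pair of sequences $U(0),U(1),\dots\in\mathbb{R}^n$ and $V(0),V(1),\dots\in\mathbb{R}^m$ such that $\min U(0)=\max V(0)$ and, for each $t$, $U(t+1)=U(t)+A_{i(t),*}$ and $V(t+1)=V(t)+A_{*,j(t)}$ for some indices $i(t)\in\{1,\dots,m\}$, $j(t)\in\{1,\dots,n\}$, where $A_{i,*}$ is the $i$th row and $A_{*,j}$ the $j$th column of $A$. Write $u_j(t)$, $v_i(t)$ for the entries of $U(t)$, $V(t)$, and $\max$, $\min$ of a vector for its largest/smallest entry. With $a=\max_{i,j}|A_{i,j}|$, row $i$ is $E$-eligible in $[t,t']$ if there exists an integer $t_1\in[t,t']$ with $v_i(t_1)\ge\max V(t_1)-2a$; column $j$ is $E$-eligible in $[t,t']$ if there exists $t_1\in[t,t']$ with $u_j(t_1)\le\min U(t_1)+2a$. *)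

theory Defs
  imports Complex_Main
begin

text \<open>Matrices are A :: nat => nat => real with rows 0..<m and columns 0..<n.
  Vectors U(t) in R^n are U t :: nat => real restricted to 0..<n; V(t) in R^m likewise on 0..<m.\<close>

definition vmax :: "nat \<Rightarrow> (nat \<Rightarrow> real) \<Rightarrow> real" where
  "vmax k x = Max (x ` {0..<k})"

definition vmin :: "nat \<Rightarrow> (nat \<Rightarrow> real) \<Rightarrow> real" where
  "vmin k x = Min (x ` {0..<k})"

definition amax :: "nat \<Rightarrow> nat \<Rightarrow> (nat \<Rightarrow> nat \<Rightarrow> real) \<Rightarrow> real" where
  "amax m n A = Max {\<bar>A i j\<bar> | i j. i < m \<and> j < n}"

definition iterative_play_system ::
  "nat \<Rightarrow> nat \<Rightarrow> (nat \<Rightarrow> nat \<Rightarrow> real) \<Rightarrow> (nat \<Rightarrow> nat \<Rightarrow> real) \<Rightarrow> (nat \<Rightarrow> nat \<Rightarrow> real) \<Rightarrow> bool" where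
  "iterative_play_system m n A U V \<longleftrightarrow>
     vmin n (U 0) = vmax m (V 0) \<and>
     (\<forall>t. \<exists>i<m. \<exists>j<n.
        (\<forall>k<n. U (Suc t) k = U t k + A i k) \<and>
        (\<forall>l<m. V (Suc t) l = V t l + A l j))"

definition row_E_eligible ::
  "nat \<Rightarrow> nat \<Rightarrow> (nat \<Rightarrow> nat \<Rightarrow> real) \<Rightarrow> (nat \<Rightarrow> nat \<Rightarrow> real) \<Rightarrow> nat \<Rightarrow> nat \<Rightarrow> nat \<Rightarrow> bool" where
  "row_E_eligible m n A V i t t' \<longleftrightarrow>
     (\<exists>t1. t \<le> t1 \<and> t1 \<le> t' \<and> V t1 i \<ge> vmax m (V t1) - 2 * amax m n A)"

definition col_E_eligible ::
  "nat \<Rightarrow> nat \<Rightarrow> (nat \<Rightarrow> nat \<Rightarrow> real) \<Rightarrow> (nat \<Rightarrow> nat \<Rightarrow> real) \<Rightarrow> nat \<Rightarrow> nat \<Rightarrow> nat \<Rightarrow> bool" where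
  "col_E_eligible m n A U j t t' \<longleftrightarrow>
     (\<exists>t1. t \<le> t1 \<and> t1 \<le> t' \<and> U t1 j \<le> vmin n (U t1) + 2 * amax m n A)"

end

theory Submission
  imports Defs
begin

lemma amax_ge:
  assumes "i < m" "j < n"
  shows "\<bar>A i j\<bar> \<le> amax m n A"
proof -
  have eq: "{\<bar>A i j\<bar> | i j. i < m \<and> j < n} = (\<lambda>(i,j). \<bar>A i j\<bar>) ` ({..<m} \<times> {..<n})"
    by auto
  show ?thesis unfolding amax_def eq
    by (rule Max_ge) (use assms in auto)
qed

lemma vmax_ge: "i < k \<Longrightarrow> x i \<le> vmax k x"
  unfolding vmax_def by (rule Max_ge) auto

lemma vmin_le: "i < k \<Longrightarrow> vmin k x \<le> x i"
  unfolding vmin_def by (rule Min_le) auto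

lemma vmax_ex: "k \<ge> 1 \<Longrightarrow> \<exists>i<k. x i = vmax k x"
proof -
  assume "k \<ge> 1"
  then have "vmax k x \<in> x ` {0..<k}" unfolding vmax_def by (intro Max_in) auto
  then show ?thesis by auto
qed

lemma vmin_ex: "k \<ge> 1 \<Longrightarrow> \<exists>i<k. x i = vmin k x"
proof -
  assume "k \<ge> 1"
  then have "vmin k x \<in> x ` {0..<k}" unfolding vmin_def by (intro Min_in) auto
  then show ?thesis by auto
qed

lemma closed_form:
  fixes W :: "nat \<Rightarrow> nat \<Rightarrow> real" and B :: "nat \<Rightarrow> nat \<Rightarrow> real"
  assumes step: "\<And>t. \<forall>l<k. W (Suc t) l = W t l + B t l"
    and "l < k" and "t \<le> t'"
  shows "W t' l = W t l + (\<Sum>\<sigma>\<in>{t..<t'}. B \<sigma> l)"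
  using assms(3)
proof (induction t' rule: dec_induct)
  case base then show ?case by simp
next
  case (step q)
  then show ?case using assms(1)[of q] assms(2) by simp
qed

lemma diff_bound:
  fixes W :: "nat \<Rightarrow> nat \<Rightarrow> real" and B :: "nat \<Rightarrow> nat \<Rightarrow> real"
  assumes step: "\<And>t. \<forall>l<k. W (Suc t) l = W t l + B t l"
    and "l < k" and "t \<le> t'" and bnd: "\<And>\<sigma>. \<bar>B \<sigma> l\<bar> \<le> a"
  shows "\<bar>W t' l - W t l\<bar> \<le> a * real (t' - t)"
proof -
  have "\<bar>W t' l - W t l\<bar> = \<bar>\<Sum>\<sigma>\<in>{t..<t'}. B \<sigma> l\<bar>"
    using closed_form[where W=W and B=B and k=k, OF step assms(2,3)] by simp
  also have "\<dots> \<le> (\<Sum>\<sigma>\<in>{t..<t'}. \<bar>B \<sigma> l\<bar>)" by (rule sum_abs)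
  also have "\<dots> \<le> (\<Sum>\<sigma>\<in>{t..<t'}. a)" by (rule sum_mono) (use bnd in auto)
  also have "\<dots> = a * real (t' - t)" by simp
  finally show ?thesis .
qed

theorem lemma3:
  fixes m n :: nat and A :: "nat \<Rightarrow> nat \<Rightarrow> real"
    and U V :: "nat \<Rightarrow> nat \<Rightarrow> real" and s t :: nat
  assumes "m \<ge> 1" and "n \<ge> 1"
    and "iterative_play_system m n A U V"
    and "\<forall>i<m. row_E_eligible m n A V i s (s + t)"
    and "\<forall>j<n. col_E_eligible m n A U j s (s + t)"
  shows "vmax m (V (s + t)) - vmin n (U (s + t)) \<le> 4 * amax m n A * (real t + 1)"
proof -
  define a where "a = amax m n A"
  define T where "T = s + t"
  have ips: "vmin n (U 0) = vmax m (V 0)"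
    "\<forall>t. \<exists>i<m. \<exists>j<n. (\<forall>k<n. U (Suc t) k = U t k + A i k) \<and> (\<forall>l<m. V (Suc t) l = V t l + A l j)"
    using assms(3) unfolding iterative_play_system_def by auto
  then obtain I J where IJ: "\<And>t. I t < m" "\<And>t. J t < n"
    "\<And>t. \<forall>k<n. U (Suc t) k = U t k + A (I t) k"
    "\<And>t. \<forall>l<m. V (Suc t) l = V t l + A l (J t)"
    by metis
  have a0: "0 \<le> a" unfolding a_def using amax_ge[of 0 m 0 n A] assms(1,2) by auto
  have Vd: "\<bar>V t' i - V t0 i\<bar> \<le> a * real (t' - t0)" if "i < m" "t0 \<le> t'" for i t0 t'
    by (rule diff_bound[where W=V and k=m and B="\<lambda>\<sigma> l. A l (J \<sigma>)", OF IJ(4) that])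
       (simp add: a_def amax_ge IJ(2) that(1))
  have Ud: "\<bar>U t' j - U t0 j\<bar> \<le> a * real (t' - t0)" if "j < n" "t0 \<le> t'" for j t0 t'
    by (rule diff_bound[where W=U and k=n and B="\<lambda>\<sigma> l. A (I \<sigma>) l", OF IJ(3) that])
       (simp add: a_def amax_ge IJ(1) that(1))
  have rowb: "V T i \<ge> vmax m (V T) - 2 * a * (real t + 1)" if hi: "i < m" for i
  proof -
    obtain t1 where t1: "s \<le> t1" "t1 \<le> T" "V t1 i \<ge> vmax m (V t1) - 2 * a"
      using assms(4)[rule_format, OF hi] unfolding row_E_eligible_def T_def a_def by blast
    obtain i0 where i0: "i0 < m" "V T i0 = vmax m (V T)" using vmax_ex[OF assms(1)] by metis
    have "V T i0 \<le> V t1 i0 + a * real (T - t1)" using Vd[OF i0(1) t1(2)] by linarith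
    moreover have "V t1 i0 \<le> vmax m (V t1)" using vmax_ge[OF i0(1)] .
    moreover have "V T i \<ge> V t1 i - a * real (T - t1)" using Vd[OF that t1(2)] by linarith
    moreover have "real (T - t1) \<le> real t" using t1 T_def by auto
    moreover have "a * real (T - t1) \<le> a * real t" using calculation(4) a0 by (rule mult_left_mono)
    ultimately show ?thesis using i0 t1 by (simp add: algebra_simps)
  qed
  have colb: "U T j \<le> vmin n (U T) + 2 * a * (real t + 1)" if hj: "j < n" for j
  proof -
    obtain t1 where t1: "s \<le> t1" "t1 \<le> T" "U t1 j \<le> vmin n (U t1) + 2 * a"
      using assms(5)[rule_format, OF hj] unfolding col_E_eligible_def T_def a_def by blast
    obtain j0 where j0: "j0 < n" "U T j0 = vmin n (U T)" using vmin_ex[OF assms(2)] by metis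
    have "U T j0 \<ge> U t1 j0 - a * real (T - t1)" using Ud[OF j0(1) t1(2)] by linarith
    moreover have "U t1 j0 \<ge> vmin n (U t1)" using vmin_le[OF j0(1)] .
    moreover have "U T j \<le> U t1 j + a * real (T - t1)" using Ud[OF that t1(2)] by linarith
    moreover have "real (T - t1) \<le> real t" using t1 T_def by auto
    moreover have "a * real (T - t1) \<le> a * real t" using calculation(4) a0 by (rule mult_left_mono)
    ultimately show ?thesis using j0 t1 by (simp add: algebra_simps)
  qed
  show ?thesis
  proof (cases "T = 0")
    case True
    then have "vmax m (V (s + t)) - vmin n (U (s + t)) = 0" using ips(1) T_def by simp
    then show ?thesis using a0 a_def by simp
  next
    case False
    have VT: "V T i = V 0 i + (\<Sum>\<sigma><T. A i (J \<sigma>))" if "i < m" for i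
      using closed_form[where W=V and k=m and B="\<lambda>\<sigma> l. A l (J \<sigma>)", OF IJ(4) that, of 0 T]
      by (simp add: atLeast0LessThan)
    have UT: "U T j = U 0 j + (\<Sum>\<sigma><T. A (I \<sigma>) j)" if "j < n" for j
      using closed_form[where W=U and k=n and B="\<lambda>\<sigma> l. A (I \<sigma>) l", OF IJ(3) that, of 0 T]
      by (simp add: atLeast0LessThan)
    have "(\<Sum>\<tau><T. V T (I \<tau>) - U T (J \<tau>))
       = (\<Sum>\<tau><T. V 0 (I \<tau>) - U 0 (J \<tau>)) + ((\<Sum>\<tau><T. \<Sum>\<sigma><T. A (I \<tau>) (J \<sigma>)) - (\<Sum>\<tau><T. \<Sum>\<sigma><T. A (I \<sigma>) (J \<tau>)))"
      by (simp add: VT UT IJ(1,2) sum.distrib sum_subtractf)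
    also have "(\<Sum>\<tau><T. \<Sum>\<sigma><T. A (I \<tau>) (J \<sigma>)) = (\<Sum>\<tau><T. \<Sum>\<sigma><T. A (I \<sigma>) (J \<tau>))"
      by (rule sum.swap)
    also have "(\<Sum>\<tau><T. V 0 (I \<tau>) - U 0 (J \<tau>)) \<le> (\<Sum>\<tau><T. 0)"
    proof (rule sum_mono)
      fix \<tau> show "V 0 (I \<tau>) - U 0 (J \<tau>) \<le> 0"
        using vmax_ge[OF IJ(1)[of \<tau>], of "V 0"] vmin_le[OF IJ(2)[of \<tau>], of "U 0"] ips(1) by linarith
    qed
    finally have sumle: "(\<Sum>\<tau><T. V T (I \<tau>) - U T (J \<tau>)) \<le> 0" by simp
    have "\<exists>\<tau><T. V T (I \<tau>) \<le> U T (J \<tau>)"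
    proof (rule ccontr)
      assume "\<not> ?thesis"
      then have "\<forall>\<tau>\<in>{..<T}. 0 < V T (I \<tau>) - U T (J \<tau>)" by auto
      then have "0 < (\<Sum>\<tau><T. V T (I \<tau>) - U T (J \<tau>))"
        using False by (intro sum_pos) auto
      then show False using sumle by simp
    qed
    then obtain \<tau> where "V T (I \<tau>) \<le> U T (J \<tau>)" by auto
    then show ?thesis using rowb[OF IJ(1)[of \<tau>]] colb[OF IJ(2)[of \<tau>]] T_def a_def
      by (simp add: algebra_simps)
  qed
qed

end
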